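(* Let $D$ be a finite offline dataset of transitions $(s,a,r,s')$ from an MDP $\langle \mathcal{S},\mathcal{A},\mathcal{R},\mathcal{P},\gamma\rangle$ with no terminal states, and let $\pi$ be a deterministic policy. Let $\mathcal{X}$, $R$, $\mathcal{X}'$ be the data matrices whose $k$-th rows are, respectively, $(s,a)$, $r$ and $(s',\pi(s'))$ for the $k$-th transition of $D$. Consider an ensemble of $Q$-networks $Q_{\theta^i}$ (indexed by $i$ ranging over a probability space $Z$), all having the same infinite-width, NTK-parameterized architecture and differing only in their initial weights $\theta^i$, which are drawn independently from the initial weight distribution; $\mathbb{E}$ and $\mathbb{V}$ denote expectation and variance over this draw. Let $\hat{\Theta}^{(0)}(A,B)=\nabla_\theta Q_{\theta^i}(A)\,\nabla_\theta Q_{\theta^i}(B)^T|_{t=0}$ be the (deterministic, member-independent) neural tangent kernel at initialization, and set $C := \hat{\Theta}^{(0)}(\mathcal{X}',\mathcal{X})\,\hat{\Theta}^{(0)}(\mathcal{X},\mathcal{X})^{-1}$. Write $Q^{(0)}_{\theta^i}$ for the network at initialization and $Q^{(t)}_{\theta^i}$ for the network after $t$ iterations of the following pessimistic policy evaluation procedure: at iteration $t+1$, targets $y^i$ are computed from the iteration-$t$ networks, and each network $Q_{\theta^i}$ is trained from its initialization by gradient descent (with a suitably small learning rate) to convergence on the mean squared error $\frac{1}{|D|}\sum_{(s,a,r,s')\in D}(Q_{\theta^i}(s,a)-y^i(r,s',\pi))^2$. Two choices of targets are considered: (Method 1, independent targets) $y^i = r + \gamma\, Q^{(t)}_{\theta^i}(s',\pi(s'))$;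 (Method 2, shared targets) $y^i = r + \gamma\big(\mathbb{E}[Q^{(t)}_{\theta^i}(s',\pi(s'))] - \sqrt{\mathbb{V}[Q^{(t)}_{\theta^i}(s',\pi(s'))]}\big)$, the same for all $i$. In both cases define $Q^{(t)}_{\mathrm{LCB}}(s,a) = \mathbb{E}[Q^{(t)}_{\theta^i}(s,a)] - \sqrt{\mathbb{V}[Q^{(t)}_{\theta^i}(s,a)]}$. Then, after $t+1$ iterations, with $1$ denoting the identity matrix and squares and square roots taken element-wise: for Method 1, $$Q^{(t+1)}_{\mathrm{LCB}}(\mathcal{X}') = \mathcal{O}(\gamma^t\|C\|^t) + (1+\gamma C+\dots+\gamma^t C^t)\,C R - \sqrt{\mathbb{E}\Big[\Big((1+\gamma C+\dots+\gamma^t C^t)\big(Q^{(0)}_{\theta^i}(\mathcal{X}') - C\,Q^{(0)}_{\theta^i}(\mathcal{X})\big)\Big)^2\Big]};$$ for Method 2, $$Q^{(t+1)}_{\mathrm{LCB}}(\mathcal{X}') = \mathcal{O}(\gamma^t\|C\|^t) + (1+\gamma C+\dots+\gamma^t C^t)\,C R - (1+\gamma C+\dots+\gamma^t C^t)\sqrt{\mathbb{E}\Big[\big(Q^{(0)}_{\theta^i}(\mathcal{X}') - C\,Q^{(0)}_{\theta^i}(\mathcal{X})\big)^2\Big]}.$$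
   Context: Notation such as $Q(\mathcal{X})$ means the column vector obtained by applying $Q$ to each row of $\mathcal{X}$. The NTK parameterization and infinite-width limit are in the sense of Jacot et al.; in this limit the kernel $\hat{\Theta}^{(0)}$ converges to a deterministic kernel, identical for all ensemble members. The paper assumes $\gamma\|C\|<1$ (if $\gamma\|C\|\ge 1$ the procedure may diverge), so that the $\mathcal{O}(\gamma^t\|C\|^t)$ term vanishes as $t\to\infty$. *)

theory Defs
  imports "HOL-Analysis.Analysis" "HOL-Probability.Probability"
begin

text \<open>Neural tangent kernel given by the (possibly infinite-dimensional) gradient feature map
  at initialisation: Theta(A,B) = grad Q(A) . grad Q(B).\<close>
definition ntk :: "('x \<Rightarrow> 'h::real_inner) \<Rightarrow> 'x \<Rightarrow> 'x \<Rightarrow> real" where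
  "ntk \<phi> x y = \<phi> x \<bullet> \<phi> y"

text \<open>Data vector f(X): k-th entry is f applied to the k-th row.\<close>
definition datavec :: "('x \<Rightarrow> real) \<Rightarrow> ('n::finite \<Rightarrow> 'x) \<Rightarrow> real^'n" where
  "datavec f X = (\<chi> k. f (X k))"

text \<open>Kernel matrix Theta(A,B).\<close>
definition gram :: "('x \<Rightarrow> 'x \<Rightarrow> real) \<Rightarrow> ('n::finite \<Rightarrow> 'x) \<Rightarrow> ('n \<Rightarrow> 'x) \<Rightarrow> real^'n^'n" where
  "gram \<Theta> A B = (\<chi> k l. \<Theta> (A k) (B l))"

text \<open>Matrix power w.r.t. matrix multiplication.\<close>
primrec matpow :: "real^'n^'n \<Rightarrow> nat \<Rightarrow> real^'n^'n" where
  "matpow A 0 = mat 1"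
| "matpow A (Suc k) = A ** matpow A k"

text \<open>1 + gamma C + ... + gamma^t C^t\<close>
definition geom_sum :: "real \<Rightarrow> real^'n^'n \<Rightarrow> nat \<Rightarrow> real^'n^'n" where
  "geom_sum \<gamma> C t = (\<Sum>k\<le>t. (\<gamma> ^ k) *\<^sub>R matpow C k)"

text \<open>One step of gradient descent (learning rate eta) on the MSE
  (1/|D|) sum_j (Q(X_j) - y_j)^2, in the infinite-width NTK regime, where the network
  function evolves by kernel gradient descent with the (fixed) NTK Theta.\<close>
definition kgd_step :: "('x \<Rightarrow> 'x \<Rightarrow> real) \<Rightarrow> ('n::finite \<Rightarrow> 'x) \<Rightarrow> real \<Rightarrow> real^'n
    \<Rightarrow> ('x \<Rightarrow> real) \<Rightarrow> ('x \<Rightarrow> real)" where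
  "kgd_step \<Theta> X \<eta> y f = (\<lambda>x. f x - \<eta> * (2 / real CARD('n)) *
      (\<Sum>j\<in>UNIV. \<Theta> x (X j) * (f (X j) - y $ j)))"

text \<open>Train from initialisation f0 to convergence on targets y.\<close>
definition ntk_train :: "('x \<Rightarrow> 'x \<Rightarrow> real) \<Rightarrow> ('n::finite \<Rightarrow> 'x) \<Rightarrow> real \<Rightarrow> real^'n
    \<Rightarrow> ('x \<Rightarrow> real) \<Rightarrow> ('x \<Rightarrow> real)" where
  "ntk_train \<Theta> X \<eta> y f0 = (\<lambda>x. lim (\<lambda>m. ((kgd_step \<Theta> X \<eta> y) ^^ m) f0 x))"

text \<open>Ensemble mean, variance and lower confidence bound (over the init distribution M).\<close>
definition ens_mean :: "'z measure \<Rightarrow> ('z \<Rightarrow> real) \<Rightarrow> real" where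
  "ens_mean M f = integral\<^sup>L M f"

definition ens_var :: "'z measure \<Rightarrow> ('z \<Rightarrow> real) \<Rightarrow> real" where
  "ens_var M f = ens_mean M (\<lambda>z. (f z - ens_mean M f)^2)"

definition lcb :: "'z measure \<Rightarrow> ('z \<Rightarrow> 'x \<Rightarrow> real) \<Rightarrow> 'x \<Rightarrow> real" where
  "lcb M Q x = ens_mean M (\<lambda>z. Q z x) - sqrt (ens_var M (\<lambda>z. Q z x))"

text \<open>Method 1: independent targets y^i = r + gamma Q^(t)_i(s',pi(s')).\<close>
primrec pe_indep :: "('x \<Rightarrow> 'x \<Rightarrow> real) \<Rightarrow> ('n::finite \<Rightarrow> 'x) \<Rightarrow> ('n \<Rightarrow> 'x) \<Rightarrow> real
    \<Rightarrow> real^'n \<Rightarrow> real \<Rightarrow> ('z \<Rightarrow> 'x \<Rightarrow> real) \<Rightarrow> nat \<Rightarrow> ('z \<Rightarrow> 'x \<Rightarrow> real)" where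
  "pe_indep \<Theta> X X' \<eta> R \<gamma> Q0 0 = Q0"
| "pe_indep \<Theta> X X' \<eta> R \<gamma> Q0 (Suc t) =
     (\<lambda>z. ntk_train \<Theta> X \<eta> (R + \<gamma> *\<^sub>R datavec (pe_indep \<Theta> X X' \<eta> R \<gamma> Q0 t z) X') (Q0 z))"

text \<open>Method 2: shared pessimistic targets y = r + gamma (E Q^(t) - sqrt V Q^(t)).\<close>
primrec pe_shared :: "'z measure \<Rightarrow> ('x \<Rightarrow> 'x \<Rightarrow> real) \<Rightarrow> ('n::finite \<Rightarrow> 'x) \<Rightarrow> ('n \<Rightarrow> 'x) \<Rightarrow> real
    \<Rightarrow> real^'n \<Rightarrow> real \<Rightarrow> ('z \<Rightarrow> 'x \<Rightarrow> real) \<Rightarrow> nat \<Rightarrow> ('z \<Rightarrow> 'x \<Rightarrow> real)" where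
  "pe_shared M \<Theta> X X' \<eta> R \<gamma> Q0 0 = Q0"
| "pe_shared M \<Theta> X X' \<eta> R \<gamma> Q0 (Suc t) =
     (\<lambda>z. ntk_train \<Theta> X \<eta> (R + \<gamma> *\<^sub>R datavec (lcb M (pe_shared M \<Theta> X X' \<eta> R \<gamma> Q0 t)) X') (Q0 z))"

end

theory Submission imports Defs begin


lemma matrix_inv_left': "invertible A \<Longrightarrow> matrix_inv A ** A = mat 1"
  unfolding invertible_def matrix_inv_def by (rule someI2_ex) auto

lemma gram_mult:
  fixes \<phi> :: "'x \<Rightarrow> 'h::real_inner" and X :: "'n::finite \<Rightarrow> 'x"
  shows "(gram (ntk \<phi>) X X *v v) $ i = \<phi> (X i) \<bullet> (\<Sum>j\<in>UNIV. v$j *\<^sub>R \<phi> (X j))"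
  by (simp add: gram_def ntk_def matrix_vector_mult_def inner_sum_right algebra_simps)

lemma contraction:
  fixes \<phi> :: "'x \<Rightarrow> 'h::real_inner" and X :: "'n::finite \<Rightarrow> 'x"
  defines "G \<equiv> gram (ntk \<phi>) X X"
  defines "T \<equiv> 1 + (\<Sum>j\<in>UNIV. norm (\<phi> (X j))^2)"
  defines "B \<equiv> onorm (\<lambda>v. matrix_inv G *v v) + 1"
  assumes inv: "invertible G" and c: "0 < c" "c \<le> 1 / T"
  shows "norm (v - c *\<^sub>R (G *v v))^2 \<le> (1 - c / (T * B^2)) * norm v^2"
proof -
  define w where "w = (\<Sum>j\<in>UNIV. v$j *\<^sub>R \<phi> (X j))"
  have Gv: "\<And>i. (G *v v) $ i = \<phi> (X i) \<bullet> w" unfolding G_def w_def by (rule gram_mult)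
  have vGv: "v \<bullet> (G *v v) = w \<bullet> w"
    by (simp add: inner_vec_def Gv w_def inner_sum_left sum_distrib_left)
  have T1: "T \<ge> 1" unfolding T_def by (simp add: sum_nonneg)
  have "norm (G *v v)^2 = (\<Sum>i\<in>UNIV. (\<phi> (X i) \<bullet> w)^2)"
    by (simp only: power2_norm_eq_inner) (simp add: inner_vec_def Gv power2_eq_square)
  also have "\<dots> \<le> (\<Sum>i\<in>UNIV. norm (\<phi> (X i))^2 * (w \<bullet> w))"
  proof (rule sum_mono)
    fix i
    have "\<bar>\<phi> (X i) \<bullet> w\<bar> \<le> norm (\<phi> (X i)) * norm w" by (rule Cauchy_Schwarz_ineq2)
    hence "(\<phi> (X i) \<bullet> w)^2 \<le> (norm (\<phi> (X i)) * norm w)^2"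
      by (metis abs_ge_zero power2_abs power_mono)
    thus "(\<phi> (X i) \<bullet> w)^2 \<le> norm (\<phi> (X i))^2 * (w \<bullet> w)"
      by (simp add: power_mult_distrib power2_norm_eq_inner)
  qed
  also have "\<dots> = (T - 1) * (w \<bullet> w)" by (simp add: T_def sum_distrib_right)
  also have "\<dots> \<le> T * (w \<bullet> w)" by (simp add: mult_right_mono)
  finally have nGv: "norm (G *v v)^2 \<le> T * (w \<bullet> w)" .
  have blin: "bounded_linear (\<lambda>v. matrix_inv G *v v)" by simp
  have B1: "B \<ge> 1" unfolding B_def using onorm_pos_le[OF blin] by simp
  have "v = matrix_inv G *v (G *v v)"
    by (simp add: matrix_vector_mul_assoc matrix_inv_left'[OF inv])
  hence "norm v \<le> onorm (\<lambda>v. matrix_inv G *v v) * norm (G *v v)"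
    by (metis onorm[OF blin])
  also have "\<dots> \<le> B * norm (G *v v)" unfolding B_def by (simp add: mult_right_mono)
  finally have "norm v \<le> B * norm (G *v v)" .
  hence nv: "norm v^2 \<le> B^2 * norm (G *v v)^2"
    by (metis norm_ge_zero power_mono power_mult_distrib)
  have "norm (v - c *\<^sub>R (G *v v))^2 = norm v^2 - 2 * c * (v \<bullet> (G *v v)) + c^2 * norm (G *v v)^2"
    by (simp only: power2_norm_eq_inner) (simp add: inner_diff_left inner_diff_right inner_commute algebra_simps power2_eq_square)
  also have "\<dots> \<le> norm v^2 - 2 * c * (w \<bullet> w) + c^2 * (T * (w \<bullet> w))"
    using nGv vGv c by (simp add: mult_left_mono)
  also have "\<dots> \<le> norm v^2 - c * (w \<bullet> w)"
  proof -
    have "c * T \<le> 1" using c T1 by (simp add: field_simps)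
    hence "c^2 * (T * (w \<bullet> w)) \<le> c * (w \<bullet> w)"
      using c by (simp add: power2_eq_square mult_left_mono mult_right_mono mult.assoc[symmetric])
    thus ?thesis by simp
  qed
  also have "\<dots> \<le> norm v^2 - (c / T) * norm (G *v v)^2"
  proof -
    have "(c / T) * norm (G *v v)^2 \<le> (c / T) * (T * (w \<bullet> w))"
      using c T1 by (intro mult_left_mono[OF nGv]) simp
    also have "\<dots> = c * (w \<bullet> w)" using T1 by simp
    finally show ?thesis by simp
  qed
  also have "\<dots> \<le> norm v^2 - (c / T) * (norm v^2 / B^2)"
  proof -
    have "norm v^2 / B^2 \<le> norm (G *v v)^2" using nv B1 by (simp add: field_simps)
    hence "(c / T) * (norm v^2 / B^2) \<le> (c / T) * norm (G *v v)^2"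
      using c T1 by (intro mult_left_mono) simp_all
    thus ?thesis by linarith
  qed
  also have "\<dots> = (1 - c / (T * B^2)) * norm v^2" by (simp add: field_simps)
  finally show ?thesis .
qed

lemma ntk_train_closed:
  fixes \<phi> :: "'x \<Rightarrow> 'h::real_inner" and X :: "'n::finite \<Rightarrow> 'x"
  defines "G \<equiv> gram (ntk \<phi>) X X"
  defines "T \<equiv> 1 + (\<Sum>j\<in>UNIV. norm (\<phi> (X j))^2)"
  assumes inv: "invertible G" and eta: "0 < \<eta>" "\<eta> < real CARD('n) / (2 * T)"
  shows "ntk_train (ntk \<phi>) X \<eta> y f0 x =
    f0 x + (\<chi> j. ntk \<phi> x (X j)) \<bullet> (matrix_inv G *v (y - datavec f0 X))"
proof -
  define c where "c = \<eta> * (2 / real CARD('n))"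
  define B where "B = onorm (\<lambda>v. matrix_inv G *v v) + 1"
  define f where "f m = (kgd_step (ntk \<phi>) X \<eta> y ^^ m) f0" for m
  define e where "e m = datavec (f m) X - y" for m
  define k where "k x = (\<chi> j. ntk \<phi> x (X j))" for x
  have T1: "T \<ge> 1" unfolding T_def by (simp add: sum_nonneg)
  have c0: "0 < c" using eta by (simp add: c_def)
  have c1: "c \<le> 1 / T" using eta T1 by (simp add: c_def field_simps)
  have stepf: "f (Suc m) x = f m x - c * (k x \<bullet> e m)" for m x
    by (simp add: f_def kgd_step_def c_def k_def e_def inner_vec_def datavec_def)
  have stepe: "e (Suc m) = e m - c *\<^sub>R (G *v e m)" for m
    by (simp add: vec_eq_iff e_def datavec_def stepf k_def G_def gram_def
        matrix_vector_mult_def inner_vec_def algebra_simps)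
  have closed: "f m x = f0 x - k x \<bullet> (matrix_inv G *v (e 0 - e m))" for m x
  proof (induction m arbitrary: x)
    case 0 then show ?case by (simp add: f_def)
  next
    case (Suc m)
    have "matrix_inv G *v (e 0 - e (Suc m)) = matrix_inv G *v (e 0 - e m) + c *\<^sub>R e m"
      by (simp add: stepe algebra_simps matrix_vector_mul_assoc matrix_inv_left'[OF inv])
    then show ?case using Suc by (simp add: stepf inner_add_right)
  qed
  have B1: "B \<ge> 1" unfolding B_def using onorm_pos_le[of "\<lambda>v. matrix_inv G *v v"] by simp
  define q where "q = 1 - c / (T * B^2)"
  have q0: "0 \<le> q"
  proof -
    have "c / (T * B^2) \<le> 1"
    proof -
      have "c \<le> 1" using c1 T1 by (meson divide_le_eq_1 le_numeral_extra(4) order_trans less_le_trans zero_less_one)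
      moreover have "1 \<le> T * B^2" using T1 B1 by (metis le_numeral_extra(4) mult_mono one_le_power one_power2 mult_1_right order_trans zero_le_one)
      ultimately show ?thesis by (simp add: divide_le_eq_1)
    qed
    thus ?thesis by (simp add: q_def)
  qed
  have q1: "q < 1" using c0 T1 B1 by (simp add: q_def)
  have contr: "norm (e (Suc m))^2 \<le> q * norm (e m)^2" for m
    unfolding stepe q_def B_def T_def G_def
    by (rule contraction[OF inv[unfolded G_def] c0 c1[unfolded T_def]])
  have bnd: "norm (e m)^2 \<le> q^m * norm (e 0)^2" for m
  proof (induction m)
    case 0 then show ?case by simp
  next
    case (Suc m)
    have "norm (e (Suc m))^2 \<le> q * norm (e m)^2" by (rule contr)
    also have "\<dots> \<le> q * (q^m * norm (e 0)^2)" using Suc q0 by (rule mult_left_mono)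
    finally show ?case by simp
  qed
  have "(\<lambda>m. q^m * norm (e 0)^2) \<longlonglongrightarrow> 0"
    using q0 q1 by (simp add: LIMSEQ_power_zero tendsto_mult_left_zero)
  hence "(\<lambda>m. norm (e m)^2) \<longlonglongrightarrow> 0"
    by (rule Lim_null_comparison[rotated]) (use bnd in simp)
  hence "(\<lambda>m. norm (e m)) \<longlonglongrightarrow> 0"
    using tendsto_real_sqrt by fastforce
  hence e0: "e \<longlonglongrightarrow> 0" by (simp add: tendsto_norm_zero_iff)
  have "(\<lambda>m. f0 x - k x \<bullet> (matrix_inv G *v (e 0 - e m))) \<longlonglongrightarrow>
        f0 x - k x \<bullet> (matrix_inv G *v (e 0 - 0))"
    by (intro tendsto_intros e0 bounded_linear.tendsto[OF matrix_vector_mul_bounded_linear])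
  hence "(\<lambda>m. f m x) \<longlonglongrightarrow> f0 x - k x \<bullet> (matrix_inv G *v e 0)"
    by (simp add: closed)
  hence "ntk_train (ntk \<phi>) X \<eta> y f0 x = f0 x - k x \<bullet> (matrix_inv G *v e 0)"
    unfolding ntk_train_def f_def by (rule limI)
  also have "\<dots> = f0 x + k x \<bullet> (matrix_inv G *v (y - datavec f0 X))"
    by (simp add: e_def f_def matrix_vector_mult_diff_distrib inner_diff_right)
  finally show ?thesis by (simp add: k_def)
qed



definition goodf :: "'z measure \<Rightarrow> ('z \<Rightarrow> real) \<Rightarrow> bool" where
  "goodf M f \<longleftrightarrow> f \<in> borel_measurable M \<and> integrable M (\<lambda>z. (f z)^2) \<and> integral\<^sup>L M f = 0"

lemma abs_le_1_sq: "\<bar>x::real\<bar> \<le> 1 + x^2"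
proof (cases "\<bar>x\<bar> \<le> 1")
  case True thus ?thesis using zero_le_power2[of x] by linarith
next
  case False
  hence "1 * \<bar>x\<bar> \<le> \<bar>x\<bar> * \<bar>x\<bar>" by (intro mult_right_mono) simp_all
  also have "\<dots> = x^2" by (simp add: power2_eq_square abs_mult_self_eq)
  finally show ?thesis by simp
qed

lemma abs_mult_le_sq: "\<bar>(x::real) * y\<bar> \<le> x^2 + y^2"
proof -
  have "0 \<le> (\<bar>x\<bar> - \<bar>y\<bar>)^2" by simp
  hence "2*(\<bar>x\<bar>*\<bar>y\<bar>) \<le> x^2 + y^2" by (simp add: power2_diff)
  moreover have "0 \<le> \<bar>x\<bar>*\<bar>y\<bar>" by simp
  ultimately show ?thesis unfolding abs_mult by linarith
qed

lemma sqrt_from_sq: "(X::real)^2 \<le> A * B \<Longrightarrow> 0 \<le> A \<Longrightarrow> 0 \<le> B \<Longrightarrow> X \<le> sqrt A * sqrt B"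
proof -
  assume h: "X^2 \<le> A * B" "0 \<le> A" "0 \<le> B"
  have "sqrt (X^2) \<le> sqrt (A * B)" using h(1) by (rule real_sqrt_le_mono)
  thus ?thesis by (simp add: real_sqrt_mult)
qed

lemma sqrt_le_sum: "S \<le> (a + b)^2 \<Longrightarrow> 0 \<le> a \<Longrightarrow> 0 \<le> (b::real) \<Longrightarrow> sqrt S \<le> a + b"
proof -
  assume h: "S \<le> (a + b)^2" "0 \<le> a" "0 \<le> b"
  have "sqrt S \<le> sqrt ((a+b)^2)" using h(1) by (rule real_sqrt_le_mono)
  thus ?thesis using h by simp
qed

lemma (in prob_space) sq_integrable_imp:
  fixes f :: "'a \<Rightarrow> real"
  assumes "f \<in> borel_measurable M" "integrable M (\<lambda>z. (f z)^2)"
  shows "integrable M f"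
proof (rule Bochner_Integration.integrable_bound[where f="\<lambda>z. 1 + (f z)^2"])
  show "integrable M (\<lambda>z. 1 + (f z)^2)" using assms by simp
  show "AE x in M. norm (f x) \<le> norm (1 + (f x)^2)"
  proof (rule AE_I2)
    fix x
    have "\<bar>f x\<bar> \<le> 1 + (f x)^2" by (rule abs_le_1_sq)
    thus "norm (f x) \<le> norm (1 + (f x)^2)" by simp
  qed
qed (use assms in simp)

lemma (in prob_space) sq_integrable_mult:
  fixes f g :: "'a \<Rightarrow> real"
  assumes "f \<in> borel_measurable M" "integrable M (\<lambda>z. (f z)^2)"
    "g \<in> borel_measurable M" "integrable M (\<lambda>z. (g z)^2)"
  shows "integrable M (\<lambda>z. f z * g z)"
proof (rule Bochner_Integration.integrable_bound[where f="\<lambda>z. (f z)^2 + (g z)^2"])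
  show "integrable M (\<lambda>z. (f z)^2 + (g z)^2)" using assms by simp
  show "AE x in M. norm (f x * g x) \<le> norm ((f x)^2 + (g x)^2)"
  proof (rule AE_I2)
    fix x
    have "\<bar>f x * g x\<bar> \<le> (f x)^2 + (g x)^2" by (rule abs_mult_le_sq)
    thus "norm (f x * g x) \<le> norm ((f x)^2 + (g x)^2)" by simp
  qed
qed (use assms in simp)

lemma (in prob_space) goodf_integrable: "goodf M f \<Longrightarrow> integrable M f"
  unfolding goodf_def using sq_integrable_imp by blast

lemma (in prob_space) goodf_mult: "goodf M f \<Longrightarrow> goodf M g \<Longrightarrow> integrable M (\<lambda>z. f z * g z)"
  unfolding goodf_def using sq_integrable_mult by blast

lemma (in prob_space) goodf_sq_add:
  assumes "goodf M f" "goodf M g"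
  shows "integrable M (\<lambda>z. (f z + g z)^2)"
proof -
  have "integrable M (\<lambda>z. (f z)^2 + 2 * (f z * g z) + (g z)^2)"
    using assms goodf_mult[OF assms] unfolding goodf_def by simp
  moreover have "(\<lambda>z. (f z + g z)^2) = (\<lambda>z. (f z)^2 + 2 * (f z * g z) + (g z)^2)"
    by (rule ext) (simp add: power2_sum)
  ultimately show ?thesis by simp
qed

lemma (in prob_space) goodf_add:
  assumes f: "goodf M f" and g: "goodf M g" shows "goodf M (\<lambda>z. f z + g z)"
proof -
  have i: "integrable M f" "integrable M g" using f g by (simp_all add: goodf_integrable)
  have "integral\<^sup>L M (\<lambda>z. f z + g z) = integral\<^sup>L M f + integral\<^sup>L M g"
    by (rule Bochner_Integration.integral_add[OF i])
  also have "\<dots> = 0" using f g unfolding goodf_def by simp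
  finally have 1: "integral\<^sup>L M (\<lambda>z. f z + g z) = 0" .
  have [measurable]: "f \<in> borel_measurable M" "g \<in> borel_measurable M" using f g unfolding goodf_def by simp_all
  have 2: "(\<lambda>z. f z + g z) \<in> borel_measurable M" by measurable
  show ?thesis unfolding goodf_def using 1 2 goodf_sq_add[OF f g] by blast
qed

lemma (in prob_space) goodf_scale:
  assumes f: "goodf M f" shows "goodf M (\<lambda>z. c * f z)"
proof -
  have "integrable M (\<lambda>z. c^2 * (f z)^2)" using f unfolding goodf_def by simp
  hence 1: "integrable M (\<lambda>z. (c * f z)^2)" by (simp add: power_mult_distrib)
  have 2: "integral\<^sup>L M (\<lambda>z. c * f z) = 0" using f unfolding goodf_def by simp
  have [measurable]: "f \<in> borel_measurable M" using f unfolding goodf_def by simp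
  have 3: "(\<lambda>z. c * f z) \<in> borel_measurable M" by measurable
  show ?thesis unfolding goodf_def using 1 2 3 by blast
qed

lemma (in prob_space) goodf_zero: "goodf M (\<lambda>z. 0)"
  unfolding goodf_def by simp

lemma (in prob_space) goodf_sum: "(\<And>i. i \<in> I \<Longrightarrow> goodf M (f i)) \<Longrightarrow> goodf M (\<lambda>z. \<Sum>i\<in>I. f i z)"
proof (induction I rule: infinite_finite_induct)
  case (infinite A) then show ?case by (simp add: goodf_zero)
next
  case empty then show ?case by (simp add: goodf_zero)
next
  case (insert x F) then show ?case by (simp add: goodf_add)
qed

lemma (in prob_space) cauchy_schwarz_goodf:
  assumes "goodf M f" "goodf M g"
  shows "(integral\<^sup>L M (\<lambda>z. f z * g z))^2 \<le> integral\<^sup>L M (\<lambda>z. (f z)^2) * integral\<^sup>L M (\<lambda>z. (g z)^2)"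
proof -
  define A where "A = integral\<^sup>L M (\<lambda>z. (f z)^2)"
  define B where "B = integral\<^sup>L M (\<lambda>z. (g z)^2)"
  define Xv where "Xv = integral\<^sup>L M (\<lambda>z. f z * g z)"
  have A0: "A \<ge> 0" unfolding A_def by simp
  have B0: "B \<ge> 0" unfolding B_def by simp
  have quad: "A + 2 * l * Xv + l^2 * B \<ge> 0" for l
  proof -
    have "goodf M (\<lambda>z. l * g z)" using assms(2) by (rule goodf_scale)
    hence "integrable M (\<lambda>z. (f z + l * g z)^2)" using assms(1) goodf_sq_add by blast
    have "0 \<le> integral\<^sup>L M (\<lambda>z. (f z + l * g z)^2)" by simp
    also have "\<dots> = integral\<^sup>L M (\<lambda>z. (f z)^2 + (2 * l) * (f z * g z) + l^2 * (g z)^2)"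
      by (simp add: power2_sum power_mult_distrib algebra_simps)
    also have "\<dots> = A + 2 * l * Xv + l^2 * B"
      using assms goodf_mult[OF assms] unfolding A_def B_def Xv_def goodf_def by simp
    finally show ?thesis .
  qed
  show ?thesis
  proof (cases "B = 0")
    case True
    have "Xv = 0"
    proof (rule ccontr)
      assume "Xv \<noteq> 0"
      have "A + 2 * (- (A + 1) / (2 * Xv)) * Xv + (- (A + 1) / (2 * Xv))^2 * B \<ge> 0" by (rule quad)
      with True \<open>Xv \<noteq> 0\<close> show False by (simp add: field_simps)
    qed
    thus ?thesis unfolding Xv_def A_def B_def using A0 B0 True by (simp add: Xv_def)
  next
    case False
    hence Bp: "B > 0" using B0 by simp
    have "A + 2 * (- Xv / B) * Xv + (- Xv / B)^2 * B \<ge> 0" by (rule quad)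
    hence "A - Xv^2 / B \<ge> 0" using Bp by (simp add: field_simps power2_eq_square)
    hence "Xv^2 \<le> A * B" using Bp by (simp add: field_simps)
    thus ?thesis unfolding Xv_def A_def B_def .
  qed
qed

lemma (in prob_space) minkowski_goodf:
  assumes "goodf M f" "goodf M g"
  shows "sqrt (integral\<^sup>L M (\<lambda>z. (f z + g z)^2)) \<le> sqrt (integral\<^sup>L M (\<lambda>z. (f z)^2)) + sqrt (integral\<^sup>L M (\<lambda>z. (g z)^2))"
proof -
  define A where "A = integral\<^sup>L M (\<lambda>z. (f z)^2)"
  define B where "B = integral\<^sup>L M (\<lambda>z. (g z)^2)"
  define Xv where "Xv = integral\<^sup>L M (\<lambda>z. f z * g z)"
  have A0: "A \<ge> 0" unfolding A_def by simp
  have B0: "B \<ge> 0" unfolding B_def by simp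
  have cs: "Xv^2 \<le> A * B" unfolding Xv_def A_def B_def by (rule cauchy_schwarz_goodf[OF assms])
  have "Xv \<le> sqrt A * sqrt B" using cs A0 B0 by (rule sqrt_from_sq)
  have "integral\<^sup>L M (\<lambda>z. (f z + g z)^2) = integral\<^sup>L M (\<lambda>z. (f z)^2 + 2 * (f z * g z) + (g z)^2)"
    by (rule Bochner_Integration.integral_cong) (simp_all add: power2_sum)
  also have "\<dots> = A + 2 * Xv + B"
    using assms goodf_mult[OF assms] unfolding A_def B_def Xv_def goodf_def by simp
  also have "\<dots> \<le> (sqrt A + sqrt B)^2"
    using \<open>Xv \<le> sqrt A * sqrt B\<close> A0 B0 by (simp add: power2_sum)
  finally show ?thesis unfolding A_def B_def by (rule sqrt_le_sum) simp_all
qed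

lemma (in prob_space) sqrt_diff_goodf:
  assumes "goodf M f" "goodf M g"
  shows "\<bar>sqrt (integral\<^sup>L M (\<lambda>z. (f z)^2)) - sqrt (integral\<^sup>L M (\<lambda>z. (f z + g z)^2))\<bar>
    \<le> sqrt (integral\<^sup>L M (\<lambda>z. (g z)^2))"
proof -
  have "goodf M (\<lambda>z. f z + g z)" using assms by (rule goodf_add)
  moreover have "goodf M (\<lambda>z. (-1) * g z)" using assms(2) by (rule goodf_scale)
  ultimately have "sqrt (integral\<^sup>L M (\<lambda>z. ((f z + g z) + (-1) * g z)^2)) \<le>
     sqrt (integral\<^sup>L M (\<lambda>z. (f z + g z)^2)) + sqrt (integral\<^sup>L M (\<lambda>z. ((-1) * g z)^2))"
    by (rule minkowski_goodf)
  moreover have "sqrt (integral\<^sup>L M (\<lambda>z. (f z + g z)^2)) \<le> sqrt (integral\<^sup>L M (\<lambda>z. (f z)^2)) + sqrt (integral\<^sup>L M (\<lambda>z. (g z)^2))"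
    using assms by (rule minkowski_goodf)
  ultimately show ?thesis by simp
qed

lemma (in prob_space) mean_var:
  assumes "goodf M f"
  shows "ens_mean M (\<lambda>z. c + f z) = c" "ens_var M (\<lambda>z. c + f z) = ens_mean M (\<lambda>z. (f z)^2)"
  using assms goodf_integrable[OF assms] unfolding ens_var_def ens_mean_def goodf_def by (simp_all add: prob_space)



lemma train_X':
  fixes \<phi> :: "'x \<Rightarrow> 'h::real_inner" and X X' :: "'n::finite \<Rightarrow> 'x"
  assumes inv: "invertible (gram (ntk \<phi>) X X)" and eta: "0 < \<eta>"
    "\<eta> < real CARD('n) / (2 * (1 + (\<Sum>j\<in>UNIV. norm (\<phi> (X j))^2)))"
  shows "datavec (ntk_train (ntk \<phi>) X \<eta> y f0) X' =
    datavec f0 X' + (gram (ntk \<phi>) X' X ** matrix_inv (gram (ntk \<phi>) X X)) *v (y - datavec f0 X)"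
  by (simp add: vec_eq_iff datavec_def ntk_train_closed[OF inv eta] matrix_vector_mul_assoc[symmetric])
     (simp add: matrix_vector_mult_def inner_vec_def gram_def datavec_def)

definition goodv :: "'z measure \<Rightarrow> ('z \<Rightarrow> real^'n) \<Rightarrow> bool" where
  "goodv M v \<longleftrightarrow> (\<forall>k. goodf M (\<lambda>z. v z $ k))"

lemma (in prob_space) goodv_mat: "goodv M v \<Longrightarrow> goodv M (\<lambda>z. A *v v z)"
  unfolding goodv_def matrix_vector_mult_def
  by (auto intro!: goodf_sum goodf_scale)

lemma (in prob_space) goodv_add: "goodv M v \<Longrightarrow> goodv M w \<Longrightarrow> goodv M (\<lambda>z. v z + w z)"
  unfolding goodv_def by (auto intro!: goodf_add)

lemma (in prob_space) goodv_scaleR: "goodv M v \<Longrightarrow> goodv M (\<lambda>z. c *\<^sub>R v z)"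
  unfolding goodv_def by (auto intro!: goodf_scale)

lemma (in prob_space) goodv_diff: "goodv M v \<Longrightarrow> goodv M w \<Longrightarrow> goodv M (\<lambda>z. v z - w z)"
proof -
  assume "goodv M v" "goodv M w"
  hence "goodv M (\<lambda>z. v z + (-1) *\<^sub>R w z)" by (intro goodv_add goodv_scaleR)
  thus ?thesis by simp
qed

lemma (in prob_space) goodv_datavec: "(\<And>x. goodf M (\<lambda>z. Q0 z x)) \<Longrightarrow> goodv M (\<lambda>z. datavec (Q0 z) X)"
  unfolding goodv_def datavec_def by simp

lemma mv_sum: "(\<Sum>k\<in>S. F k) *v (v::real^'n) = (\<Sum>k\<in>S. F k *v v)"
  by (induction S rule: infinite_finite_induct) (simp_all add: matrix_vector_mult_add_rdistrib)

lemma mv_sum_right: "(A::real^'n^'m) *v (\<Sum>k\<in>S. f k) = (\<Sum>k\<in>S. A *v f k)"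
  by (induction S rule: infinite_finite_induct) (simp_all add: matrix_vector_right_distrib)

lemma matpow_Suc_mv: "matpow C (Suc k) *v v = C *v (matpow C k *v v)"
  by (simp add: matrix_vector_mul_assoc)

lemma matpow_norm: "norm (matpow C k *v (v::real^'n)) \<le> onorm (\<lambda>v. C *v v) ^ k * norm v"
proof (induction k)
  case 0 then show ?case by simp
next
  case (Suc k)
  have "norm (matpow C (Suc k) *v v) \<le> onorm (\<lambda>v. C *v v) * norm (matpow C k *v v)"
    unfolding matpow_Suc_mv by (rule onorm) simp
  also have "\<dots> \<le> onorm (\<lambda>v. C *v v) * (onorm (\<lambda>v. C *v v) ^ k * norm v)"
    by (rule mult_left_mono[OF Suc]) (simp add: onorm_pos_le)
  finally show ?case by (simp add: mult.assoc)
qed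

definition Hv :: "real \<Rightarrow> real^'n^'n \<Rightarrow> nat \<Rightarrow> real^'n \<Rightarrow> real^'n" where
  "Hv \<gamma> C t v = (\<Sum>k<t. \<gamma>^k *\<^sub>R (matpow C k *v v))"

lemma geom_Hv: "geom_sum \<gamma> C t *v v = Hv \<gamma> C (Suc t) v"
  unfolding geom_sum_def Hv_def mv_sum lessThan_Suc_atMost
  by (simp add: scaleR_matrix_vector_assoc)

lemma Hv_Suc: "Hv \<gamma> C (Suc t) v = v + \<gamma> *\<^sub>R (C *v Hv \<gamma> C t v)"
  unfolding Hv_def sum.lessThan_Suc_shift mv_sum_right scaleR_sum_right
  by (simp add: matrix_vector_mult_scaleR matrix_vector_mul_assoc)

lemma Hv_add: "Hv \<gamma> C t (v + w) = Hv \<gamma> C t v + Hv \<gamma> C t w"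
  unfolding Hv_def by (simp add: matrix_vector_right_distrib scaleR_add_right sum.distrib)

lemma Hv_diff: "Hv \<gamma> C t (v - w) = Hv \<gamma> C t v - Hv \<gamma> C t w"
  unfolding Hv_def by (simp add: matrix_vector_mult_diff_distrib scaleR_diff_right sum_subtractf)



theorem theorem1:
  fixes M :: "'z measure"
    and Q0 :: "'z \<Rightarrow> ('s \<times> 'a) \<Rightarrow> real"
    and \<phi> :: "('s \<times> 'a) \<Rightarrow> 'h::real_inner"
    and s :: "'n::finite \<Rightarrow> 's" and a :: "'n \<Rightarrow> 'a" and r :: "'n \<Rightarrow> real" and s' :: "'n \<Rightarrow> 's"
    and \<pi> :: "'s \<Rightarrow> 'a"
    and \<gamma> :: real
  defines "\<Theta> \<equiv> ntk \<phi>"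
    and "X \<equiv> (\<lambda>k. (s k, a k))"
    and "X' \<equiv> (\<lambda>k. (s' k, \<pi> (s' k)))"
    and "R \<equiv> (\<chi> k. r k)"
    and "C \<equiv> gram (ntk \<phi>) (\<lambda>k. (s' k, \<pi> (s' k))) (\<lambda>k. (s k, a k)) ** matrix_inv (gram (ntk \<phi>) (\<lambda>k. (s k, a k)) (\<lambda>k. (s k, a k)))"
  assumes M: "prob_space M"
    and meas: "\<And>x. (\<lambda>z. Q0 z x) \<in> borel_measurable M"
    and sq_int: "\<And>x. integrable M (\<lambda>z. (Q0 z x)^2)"
    and centered: "\<And>x. ens_mean M (\<lambda>z. Q0 z x) = 0"
    and inv: "invertible (gram \<Theta> X X)"
    and gamma_nonneg: "0 \<le> \<gamma>" and gamma_lt1: "\<gamma> < 1"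
    and contr: "\<gamma> * onorm (\<lambda>v. C *v v) < 1"
  shows "\<exists>\<eta>0>0. \<forall>\<eta>. 0 < \<eta> \<and> \<eta> < \<eta>0 \<longrightarrow>
     (\<exists>K. \<forall>t.
        norm ((\<chi> k. lcb M (pe_indep \<Theta> X X' \<eta> R \<gamma> Q0 (Suc t)) (X' k))
              - (geom_sum \<gamma> C t *v (C *v R)
                 - (\<chi> k. sqrt (ens_mean M (\<lambda>z.
                      ((geom_sum \<gamma> C t *v (datavec (Q0 z) X' - C *v datavec (Q0 z) X)) $ k)^2)))))
          \<le> K * (\<gamma> * onorm (\<lambda>v. C *v v)) ^ t)
   \<and> (\<exists>K. \<forall>t.
        norm ((\<chi> k. lcb M (pe_shared M \<Theta> X X' \<eta> R \<gamma> Q0 (Suc t)) (X' k))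
              - (geom_sum \<gamma> C t *v (C *v R)
                 - geom_sum \<gamma> C t *v (\<chi> k. sqrt (ens_mean M (\<lambda>z.
                      ((datavec (Q0 z) X' - C *v datavec (Q0 z) X) $ k)^2)))))
          \<le> K * (\<gamma> * onorm (\<lambda>v. C *v v)) ^ t)"
  proof -
  interpret P: prob_space M by (rule M)
  note \<Theta>d = assms(1) and Xd = assms(2) and X'd = assms(3) and Rd = assms(4) and Cd = assms(5)
  have Cdef: "C = gram (ntk \<phi>) X' X ** matrix_inv (gram (ntk \<phi>) X X)"
    unfolding Cd X'd Xd ..
  have inv': "invertible (gram (ntk \<phi>) X X)" using inv unfolding \<Theta>d .
  define T where "T = 1 + (\<Sum>j\<in>UNIV. norm (\<phi> (X j))^2)"
  have T1: "T \<ge> 1" unfolding T_def by (simp add: sum_nonneg)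
  define \<eta>0 where "\<eta>0 = real CARD('n) / (2 * T)"
  have \<eta>0: "\<eta>0 > 0" unfolding \<eta>0_def using T1 by simp
  define \<rho> where "\<rho> = \<gamma> * onorm (\<lambda>v. C *v v)"
  have \<rho>0: "0 \<le> \<rho>" unfolding \<rho>_def using gamma_nonneg onorm_pos_le[of "\<lambda>v. C *v v"] by simp
  have pow: "norm ((\<gamma>^k) *\<^sub>R (matpow C k *v v)) \<le> \<rho>^k * norm v" for k v
  proof -
    have "norm ((\<gamma>^k) *\<^sub>R (matpow C k *v v)) = \<gamma>^k * norm (matpow C k *v v)"
      using gamma_nonneg by simp
    also have "\<dots> \<le> \<gamma>^k * (onorm (\<lambda>v. C *v v) ^ k * norm v)"
      using gamma_nonneg by (intro mult_left_mono matpow_norm) simp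
    also have "\<dots> = \<rho>^k * norm v" unfolding \<rho>_def by (simp add: power_mult_distrib)
    finally show ?thesis .
  qed
  have goodQ: "\<And>x. goodf M (\<lambda>z. Q0 z x)"
    unfolding goodf_def using meas sq_int centered unfolding ens_mean_def by simp
  define q where "q z = datavec (Q0 z) X'" for z
  define p where "p z = datavec (Q0 z) X" for z
  define d where "d z = q z - C *v p z" for z
  have gq: "goodv M q" unfolding q_def by (rule P.goodv_datavec[OF goodQ])
  have gp: "goodv M p" unfolding p_def by (rule P.goodv_datavec[OF goodQ])
  have gd: "goodv M d" unfolding d_def by (intro P.goodv_diff gq P.goodv_mat gp)
  show ?thesis
  proof (rule exI[of _ \<eta>0], intro conjI allI impI \<eta>0)
    fix \<eta> assume \<eta>: "0 < \<eta> \<and> \<eta> < \<eta>0"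
    have \<eta>': "\<eta> < real CARD('n) / (2 * (1 + (\<Sum>j\<in>UNIV. norm (\<phi> (X j))^2)))"
      using \<eta> unfolding \<eta>0_def T_def by simp
    have tr: "datavec (ntk_train \<Theta> X \<eta> y f0) X' = datavec f0 X' + C *v (y - datavec f0 X)" for y f0
      unfolding Cdef \<Theta>d by (rule train_X'[OF inv' _ \<eta>']) (use \<eta> in simp)
    show "\<exists>K. \<forall>t.
        norm ((\<chi> k. lcb M (pe_indep \<Theta> X X' \<eta> R \<gamma> Q0 (Suc t)) (X' k))
              - (geom_sum \<gamma> C t *v (C *v R)
                 - (\<chi> k. sqrt (ens_mean M (\<lambda>z.
                      ((geom_sum \<gamma> C t *v (datavec (Q0 z) X' - C *v datavec (Q0 z) X)) $ k)^2)))))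
          \<le> K * (\<gamma> * onorm (\<lambda>v. C *v v)) ^ t"
    proof -
      define Pv where "Pv t z = datavec (pe_indep \<Theta> X X' \<eta> R \<gamma> Q0 t z) X'" for t z
      have Pstep: "Pv (Suc t) z = q z + C *v (R + \<gamma> *\<^sub>R Pv t z - p z)" for t z
        by (simp add: Pv_def tr q_def p_def)
      have Pclosed: "Pv t z = Hv \<gamma> C t (d z + C *v R) + \<gamma>^t *\<^sub>R (matpow C t *v q z)" for t z
      proof (induction t)
        case 0 then show ?case by (simp add: Hv_def Pv_def q_def)
      next
        case (Suc t)
        show ?case unfolding Pstep Suc Hv_Suc matpow_Suc_mv d_def
          by (simp add: algebra_simps matrix_vector_right_distrib matrix_vector_mult_diff_distrib matrix_vector_mult_scaleR)
      qed
      define W where "W = ens_mean M (\<lambda>z. norm (q z)^2)"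
      have nq: "norm (q z)^2 = (\<Sum>j\<in>UNIV. (Q0 z (X' j))^2)" for z
        by (simp only: power2_norm_eq_inner) (simp add: inner_vec_def q_def datavec_def power2_eq_square)
      have intq: "integrable M (\<lambda>z. norm (q z)^2)"
        unfolding nq using sq_int by simp
      show ?thesis
      proof (rule exI[of _ "real CARD('n) * \<rho> * sqrt W"], rule allI)
        fix t
        define a where "a z = geom_sum \<gamma> C t *v d z" for z
        define b where "b z = \<gamma>^(Suc t) *\<^sub>R (matpow C (Suc t) *v q z)" for z
        define m where "m = geom_sum \<gamma> C t *v (C *v R)"
        have Pe: "Pv (Suc t) z = m + (a z + b z)" for z
          unfolding Pclosed a_def b_def m_def geom_Hv Hv_add by simp
        have ga: "goodv M a" unfolding a_def by (rule P.goodv_mat[OF gd])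
        have gb: "goodv M b" unfolding b_def by (intro P.goodv_scaleR P.goodv_mat gq)
        have gak: "goodf M (\<lambda>z. a z $ k)" for k using ga unfolding goodv_def by blast
        have gbk: "goodf M (\<lambda>z. b z $ k)" for k using gb unfolding goodv_def by blast
        have comp: "(\<lambda>z. pe_indep \<Theta> X X' \<eta> R \<gamma> Q0 (Suc t) z (X' k)) = (\<lambda>z. m $ k + (a z $ k + b z $ k))" for k
        proof (rule ext)
          fix z
          have "Pv (Suc t) z $ k = (m + (a z + b z)) $ k" by (simp only: Pe)
          thus "pe_indep \<Theta> X X' \<eta> R \<gamma> Q0 (Suc t) z (X' k) = m $ k + (a z $ k + b z $ k)"
            by (simp add: Pv_def datavec_def)
        qed
        have lk: "lcb M (pe_indep \<Theta> X X' \<eta> R \<gamma> Q0 (Suc t)) (X' k) = m $ k - sqrt (ens_mean M (\<lambda>z. (a z $ k + b z $ k)^2))" for k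
          unfolding lcb_def comp P.mean_var[OF P.goodf_add[OF gak gbk]] by simp
        define V where "V = (\<chi> k. lcb M (pe_indep \<Theta> X X' \<eta> R \<gamma> Q0 (Suc t)) (X' k))
              - (geom_sum \<gamma> C t *v (C *v R)
                 - (\<chi> k. sqrt (ens_mean M (\<lambda>z.
                      ((geom_sum \<gamma> C t *v (datavec (Q0 z) X' - C *v datavec (Q0 z) X)) $ k)^2))))"
        have Vk: "V $ k = sqrt (ens_mean M (\<lambda>z. (a z $ k)^2)) - sqrt (ens_mean M (\<lambda>z. (a z $ k + b z $ k)^2))" for k
        proof -
          have "V $ k = lcb M (pe_indep \<Theta> X X' \<eta> R \<gamma> Q0 (Suc t)) (X' k) - (m $ k - sqrt (ens_mean M (\<lambda>z. (a z $ k)^2)))"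
            by (simp add: V_def m_def a_def d_def q_def p_def del: pe_indep.simps)
          thus ?thesis unfolding lk by simp
        qed
        have Ebk: "ens_mean M (\<lambda>z. (b z $ k)^2) \<le> (\<rho>^(Suc t))^2 * W" for k
        proof -
          have "ens_mean M (\<lambda>z. (b z $ k)^2) \<le> ens_mean M (\<lambda>z. (\<rho>^(Suc t))^2 * norm (q z)^2)"
            unfolding ens_mean_def
          proof (rule integral_mono)
            show "integrable M (\<lambda>z. (b z $ k)^2)" using gbk unfolding goodf_def by blast
            show "integrable M (\<lambda>z. (\<rho>^(Suc t))^2 * norm (q z)^2)" using intq by simp
            fix z
            have "\<bar>b z $ k\<bar> \<le> norm (b z)" by (rule component_le_norm_cart)
            also have "\<dots> \<le> \<rho>^(Suc t) * norm (q z)" unfolding b_def by (rule pow)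
            finally have "\<bar>b z $ k\<bar> \<le> \<rho>^(Suc t) * norm (q z)" .
            hence "\<bar>b z $ k\<bar>^2 \<le> (\<rho>^(Suc t) * norm (q z))^2" by (rule power_mono) simp
            thus "(b z $ k)^2 \<le> (\<rho>^(Suc t))^2 * norm (q z)^2" by (simp add: power_mult_distrib)
          qed
          also have "\<dots> = (\<rho>^(Suc t))^2 * W" unfolding W_def ens_mean_def by simp
          finally show ?thesis .
        qed
        have W0: "0 \<le> W" unfolding W_def ens_mean_def by simp
        have Vkb: "\<bar>V $ k\<bar> \<le> \<rho>^(Suc t) * sqrt W" for k
        proof -
          have "\<bar>V $ k\<bar> \<le> sqrt (ens_mean M (\<lambda>z. (b z $ k)^2))"
            unfolding Vk ens_mean_def by (rule P.sqrt_diff_goodf[OF gak gbk])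
          also have "\<dots> \<le> sqrt ((\<rho>^(Suc t))^2 * W)" by (rule real_sqrt_le_mono[OF Ebk])
          also have "\<dots> = \<rho>^(Suc t) * sqrt W" using \<rho>0 by (simp add: real_sqrt_mult)
          finally show ?thesis .
        qed
        have "norm V \<le> (\<Sum>k\<in>UNIV. \<bar>V $ k\<bar>)" by (rule norm_le_l1_cart)
        also have "\<dots> \<le> (\<Sum>k\<in>(UNIV::'n set). \<rho>^(Suc t) * sqrt W)" by (rule sum_mono) (rule Vkb)
        also have "\<dots> = real CARD('n) * \<rho> * sqrt W * \<rho>^t" by (simp add: mult_ac)
        finally show "norm ((\<chi> k. lcb M (pe_indep \<Theta> X X' \<eta> R \<gamma> Q0 (Suc t)) (X' k))
              - (geom_sum \<gamma> C t *v (C *v R)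
                 - (\<chi> k. sqrt (ens_mean M (\<lambda>z.
                      ((geom_sum \<gamma> C t *v (datavec (Q0 z) X' - C *v datavec (Q0 z) X)) $ k)^2)))))
          \<le> real CARD('n) * \<rho> * sqrt W * (\<gamma> * onorm (\<lambda>v. C *v v)) ^ t"
          unfolding V_def \<rho>_def .
      qed
    qed
    show "\<exists>K. \<forall>t.
        norm ((\<chi> k. lcb M (pe_shared M \<Theta> X X' \<eta> R \<gamma> Q0 (Suc t)) (X' k))
              - (geom_sum \<gamma> C t *v (C *v R)
                 - geom_sum \<gamma> C t *v (\<chi> k. sqrt (ens_mean M (\<lambda>z.
                      ((datavec (Q0 z) X' - C *v datavec (Q0 z) X) $ k)^2)))))
          \<le> K * (\<gamma> * onorm (\<lambda>v. C *v v)) ^ t"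
    proof -
      define L where "L t = datavec (lcb M (pe_shared M \<Theta> X X' \<eta> R \<gamma> Q0 t)) X'" for t
      define \<sigma> where "\<sigma> = (\<chi> k. sqrt (ens_mean M (\<lambda>z. (d z $ k)^2)))"
      have Lstep: "L (Suc t) = C *v R + \<gamma> *\<^sub>R (C *v L t) - \<sigma>" for t
      proof -
        define cc where "cc = C *v R + \<gamma> *\<^sub>R (C *v L t)"
        have ps: "pe_shared M \<Theta> X X' \<eta> R \<gamma> Q0 (Suc t) z = ntk_train \<Theta> X \<eta> (R + \<gamma> *\<^sub>R L t) (Q0 z)" for z
          by (simp add: L_def)
        have dv: "datavec (pe_shared M \<Theta> X X' \<eta> R \<gamma> Q0 (Suc t) z) X' = cc + d z" for z
          unfolding ps tr cc_def d_def q_def p_def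
          by (simp add: algebra_simps matrix_vector_right_distrib matrix_vector_mult_diff_distrib matrix_vector_mult_scaleR)
        have comp: "(\<lambda>z. pe_shared M \<Theta> X X' \<eta> R \<gamma> Q0 (Suc t) z (X' k)) = (\<lambda>z. cc $ k + d z $ k)" for k
        proof (rule ext)
          fix z
          have "datavec (pe_shared M \<Theta> X X' \<eta> R \<gamma> Q0 (Suc t) z) X' $ k = (cc + d z) $ k" by (simp only: dv)
          thus "pe_shared M \<Theta> X X' \<eta> R \<gamma> Q0 (Suc t) z (X' k) = cc $ k + d z $ k" by (simp add: datavec_def)
        qed
        have gdk: "goodf M (\<lambda>z. d z $ k)" for k using gd unfolding goodv_def by blast
        show ?thesis
          unfolding vec_eq_iff
        proof
          fix k
          have "L (Suc t) $ k = lcb M (pe_shared M \<Theta> X X' \<eta> R \<gamma> Q0 (Suc t)) (X' k)"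
            by (simp add: L_def datavec_def)
          also have "\<dots> = cc $ k - \<sigma> $ k"
            unfolding lcb_def comp P.mean_var[OF gdk] \<sigma>_def by simp
          finally show "L (Suc t) $ k = (C *v R + \<gamma> *\<^sub>R (C *v L t) - \<sigma>) $ k" by (simp add: cc_def)
        qed
      qed
      have Lclosed: "L t = Hv \<gamma> C t (C *v R - \<sigma>) + \<gamma>^t *\<^sub>R (matpow C t *v L 0)" for t
      proof (induction t)
        case 0 then show ?case by (simp add: Hv_def)
      next
        case (Suc t)
        show ?case unfolding Lstep Suc Hv_Suc matpow_Suc_mv
          by (simp add: algebra_simps matrix_vector_right_distrib matrix_vector_mult_diff_distrib matrix_vector_mult_scaleR)
      qed
      show ?thesis
      proof (rule exI[of _ "\<rho> * norm (L 0)"], rule allI)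
        fix t
        have lhs: "(\<chi> k. lcb M (pe_shared M \<Theta> X X' \<eta> R \<gamma> Q0 (Suc t)) (X' k)) = L (Suc t)"
          by (simp add: L_def datavec_def)
        have sg: "(\<chi> k. sqrt (ens_mean M (\<lambda>z. ((datavec (Q0 z) X' - C *v datavec (Q0 z) X) $ k)^2))) = \<sigma>"
          by (simp add: \<sigma>_def d_def q_def p_def)
        have "(\<chi> k. lcb M (pe_shared M \<Theta> X X' \<eta> R \<gamma> Q0 (Suc t)) (X' k))
              - (geom_sum \<gamma> C t *v (C *v R)
                 - geom_sum \<gamma> C t *v (\<chi> k. sqrt (ens_mean M (\<lambda>z.
                      ((datavec (Q0 z) X' - C *v datavec (Q0 z) X) $ k)^2))))
              = \<gamma>^(Suc t) *\<^sub>R (matpow C (Suc t) *v L 0)" (is "?V = _")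
          unfolding lhs sg geom_Hv Lclosed[of "Suc t"] Hv_diff[symmetric] by simp
        have "norm ((\<chi> k. lcb M (pe_shared M \<Theta> X X' \<eta> R \<gamma> Q0 (Suc t)) (X' k))
              - (geom_sum \<gamma> C t *v (C *v R)
                 - geom_sum \<gamma> C t *v (\<chi> k. sqrt (ens_mean M (\<lambda>z.
                      ((datavec (Q0 z) X' - C *v datavec (Q0 z) X) $ k)^2))))) \<le> \<rho>^(Suc t) * norm (L 0)"
          unfolding \<open>?V = _\<close> by (rule pow)
        thus "norm ((\<chi> k. lcb M (pe_shared M \<Theta> X X' \<eta> R \<gamma> Q0 (Suc t)) (X' k))
              - (geom_sum \<gamma> C t *v (C *v R)
                 - geom_sum \<gamma> C t *v (\<chi> k. sqrt (ens_mean M (\<lambda>z.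
                      ((datavec (Q0 z) X' - C *v datavec (Q0 z) X) $ k)^2)))))
          \<le> \<rho> * norm (L 0) * (\<gamma> * onorm (\<lambda>v. C *v v)) ^ t"
          unfolding \<rho>_def[symmetric] by (simp add: mult_ac)
      qed
    qed
  qed
qed


end
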